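(* For any prefix $p$ and stream type $s$, there is at most one stream type $s'$ such that $\delta_p s \sim s'$. If moreover $p : s$, then such an $s'$ exists.
   Context: Stream types are generated by $s,t ::= 1 \mid \varepsilon \mid s\cdot t \mid s\,\|\,t \mid s+t \mid s^\star$. Prefixes are generated by $p ::= \mathtt{oneEmp} \mid \mathtt{oneFull} \mid \mathtt{epsEmp} \mid \mathtt{par}(p,p') \mid \mathtt{catA}(p) \mid \mathtt{catB}(p,p') \mid \mathtt{sumEmp} \mid \mathtt{inl}(p) \mid \mathtt{inr}(p) \mid \mathtt{starEmp} \mid \mathtt{starDone} \mid \mathtt{stA}(p) \mid \mathtt{stB}(p,p')$. Maximality (inductive): $\mathtt{epsEmp}$, $\mathtt{oneFull}$, $\mathtt{starDone}$ are maximal; $\mathtt{par}(p_1,p_2)$, $\mathtt{catB}(p_1,p_2)$, $\mathtt{stB}(p_1,p_2)$ are maximal if $p_1$ and $p_2$ are; $\mathtt{inl}(p)$, $\mathtt{inr}(p)$ are maximal if $p$ is. Prefix typing $p : s$ (inductive): $\mathtt{epsEmp}:\varepsilon$; $\mathtt{oneEmp}:1$; $\mathtt{oneFull}:1$; $\mathtt{par}(p_1,p_2): s\|t$ if $p_1:s$, $p_2:t$; $\mathtt{catA}(p): s\cdot t$ if $p:s$; $\mathtt{catB}(p_1,p_2): s\cdot t$ if $p_1:s$, $p_1$ maximal, $p_2:t$; $\mathtt{sumEmp}: s+t$; $\mathtt{inl}(p):s+t$ if $p:s$; $\mathtt{inr}(p):s+t$ if $p:t$; $\mathtt{starEmp}:s^\star$;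 $\mathtt{starDone}:s^\star$; $\mathtt{stA}(p):s^\star$ if $p:s$; $\mathtt{stB}(p,p'):s^\star$ if $p:s$, $p$ maximal, $p':s^\star$. The derivative relation $\delta_p s \sim s'$ is defined inductively by: $\delta_{\mathtt{epsEmp}}\varepsilon\sim\varepsilon$; $\delta_{\mathtt{oneEmp}}1\sim 1$; $\delta_{\mathtt{oneFull}}1\sim\varepsilon$; $\delta_{\mathtt{par}(p_1,p_2)}(s\|t)\sim s'\|t'$ if $\delta_{p_1}s\sim s'$ and $\delta_{p_2}t\sim t'$; $\delta_{\mathtt{catA}(p)}(s\cdot t)\sim s'\cdot t$ if $\delta_p s\sim s'$; $\delta_{\mathtt{catB}(p_1,p_2)}(s\cdot t)\sim t'$ if $\delta_{p_2}t\sim t'$; $\delta_{\mathtt{sumEmp}}(s+t)\sim s+t$; $\delta_{\mathtt{inl}(p)}(s+t)\sim s'$ if $\delta_p s\sim s'$; $\delta_{\mathtt{inr}(p)}(s+t)\sim t'$ if $\delta_p t\sim t'$; $\delta_{\mathtt{starEmp}}s^\star\sim s^\star$; $\delta_{\mathtt{starDone}}s^\star\sim\varepsilon$; $\delta_{\mathtt{stA}(p)}s^\star\sim s'\cdot s^\star$ if $\delta_p s\sim s'$; $\delta_{\mathtt{stB}(p,p')}s^\star\sim s'$ if $\delta_{p'}s^\star\sim s'$. *)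

theory Defs
  imports Main
begin

datatype stream_ty = One | Eps | Cat stream_ty stream_ty | Par stream_ty stream_ty
  | Sum stream_ty stream_ty | Star stream_ty

datatype prefix = OneEmp | OneFull | EpsEmp | ParP prefix prefix | CatA prefix
  | CatB prefix prefix | SumEmp | Inl prefix | Inr prefix | StarEmp | StarDone
  | StA prefix | StB prefix prefix

inductive maximal :: "prefix \<Rightarrow> bool" where
  "maximal EpsEmp"
| "maximal OneFull"
| "maximal StarDone"
| "maximal p1 \<Longrightarrow> maximal p2 \<Longrightarrow> maximal (ParP p1 p2)"
| "maximal p1 \<Longrightarrow> maximal p2 \<Longrightarrow> maximal (CatB p1 p2)"
| "maximal p1 \<Longrightarrow> maximal p2 \<Longrightarrow> maximal (StB p1 p2)"
| "maximal p \<Longrightarrow> maximal (Inl p)"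
| "maximal p \<Longrightarrow> maximal (Inr p)"

inductive has_type :: "prefix \<Rightarrow> stream_ty \<Rightarrow> bool" where
  "has_type EpsEmp Eps"
| "has_type OneEmp One"
| "has_type OneFull One"
| "has_type p1 s \<Longrightarrow> has_type p2 t \<Longrightarrow> has_type (ParP p1 p2) (Par s t)"
| "has_type p s \<Longrightarrow> has_type (CatA p) (Cat s t)"
| "has_type p1 s \<Longrightarrow> maximal p1 \<Longrightarrow> has_type p2 t \<Longrightarrow> has_type (CatB p1 p2) (Cat s t)"
| "has_type SumEmp (Sum s t)"
| "has_type p s \<Longrightarrow> has_type (Inl p) (Sum s t)"
| "has_type p t \<Longrightarrow> has_type (Inr p) (Sum s t)"
| "has_type StarEmp (Star s)"
| "has_type StarDone (Star s)"
| "has_type p s \<Longrightarrow> has_type (StA p) (Star s)"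
| "has_type p s \<Longrightarrow> maximal p \<Longrightarrow> has_type p' (Star s) \<Longrightarrow> has_type (StB p p') (Star s)"

inductive deriv :: "prefix \<Rightarrow> stream_ty \<Rightarrow> stream_ty \<Rightarrow> bool" where
  "deriv EpsEmp Eps Eps"
| "deriv OneEmp One One"
| "deriv OneFull One Eps"
| "deriv p1 s s' \<Longrightarrow> deriv p2 t t' \<Longrightarrow> deriv (ParP p1 p2) (Par s t) (Par s' t')"
| "deriv p s s' \<Longrightarrow> deriv (CatA p) (Cat s t) (Cat s' t)"
| "deriv p2 t t' \<Longrightarrow> deriv (CatB p1 p2) (Cat s t) t'"
| "deriv SumEmp (Sum s t) (Sum s t)"
| "deriv p s s' \<Longrightarrow> deriv (Inl p) (Sum s t) s'"
| "deriv p t t' \<Longrightarrow> deriv (Inr p) (Sum s t) t'"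
| "deriv StarEmp (Star s) (Star s)"
| "deriv StarDone (Star s) Eps"
| "deriv p s s' \<Longrightarrow> deriv (StA p) (Star s) (Cat s' (Star s))"
| "deriv p' (Star s) s' \<Longrightarrow> deriv (StB p p') (Star s) s'"

end

theory Submission
  imports Defs
begin

inductive_cases dE1: "deriv EpsEmp s t"
inductive_cases dE2: "deriv OneEmp s t"
inductive_cases dE3: "deriv OneFull s t"
inductive_cases dE4: "deriv (ParP p q) s t"
inductive_cases dE5: "deriv (CatA p) s t"
inductive_cases dE6: "deriv (CatB p q) s t"
inductive_cases dE7: "deriv SumEmp s t"
inductive_cases dE8: "deriv (Inl p) s t"
inductive_cases dE9: "deriv (Inr p) s t"
inductive_cases dE10: "deriv StarEmp s t"
inductive_cases dE11: "deriv StarDone s t"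
inductive_cases dE12: "deriv (StA p) s t"
inductive_cases dE13: "deriv (StB p q) s t"

lemma det: "deriv p s s1 \<Longrightarrow> deriv p s s2 \<Longrightarrow> s1 = s2"
proof (induction p s s1 arbitrary: s2 rule: deriv.induct)
qed (blast elim: dE1 dE2 dE3 dE4 dE5 dE6 dE7 dE8 dE9 dE10 dE11 dE12 dE13)+

lemma ex: "has_type p s \<Longrightarrow> \<exists>s'. deriv p s s'"
proof (induction p s rule: has_type.induct)
qed (auto intro: deriv.intros)

theorem mainTheorem2:
  shows "(\<forall>p s s1 s2. deriv p s s1 \<longrightarrow> deriv p s s2 \<longrightarrow> s1 = s2)
       \<and> (\<forall>p s. has_type p s \<longrightarrow> (\<exists>s'. deriv p s s'))"
  using det ex by blast

end
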